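(* Fix $\mathbf{W}>0$ and $f>0$ and consider the tree–grass ODE system \[ \frac{dG}{dt}=g_G(\mathbf{W})G\Big(1-\frac{G}{K_G(\mathbf{W})}\Big)-\delta_G G-\eta_{TG}TG-\lambda_{fG}fG,\qquad \frac{dT}{dt}=g_T(\mathbf{W})T\Big(1-\frac{T}{K_T(\mathbf{W})}\Big)-\delta_T T-f\vartheta(T)\omega(G)T . \] Then: (1) The desert equilibrium $\mathbf{E}_0=(0,0)$ is locally asymptotically stable when $\mathcal{R}^1_{\mathbf{W}}<1$ and $\mathcal{R}^2_{\mathbf{W}}<1$. (2) The grassland equilibrium $\mathbf{E}_G=(G^*,0)$ (which exists when $\mathcal{R}^2_{\mathbf{W}}>1$) is locally asymptotically stable when $\mathcal{R}_G<1$. (3) The forest equilibrium $\mathbf{E}_F=(0,T^* )$ (which exists when $\mathcal{R}^1_{\mathbf{W}}>1$) is locally asymptotically stable when $\mathcal{R}_F<1$.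
   Context: All parameters $\gamma_G,\gamma_T,b_G,b_T,c_G,c_T,d_G,d_T,a_G,a_T,\delta_G,\delta_T,\eta_{TG},\lambda_{fG},\lambda_{fT}^{min},\lambda_{fT}^{max},p,\alpha$ are positive constants, $\lambda_{fT}^{min}<\lambda_{fT}^{max}$. $g_G(\mathbf{W})=\frac{\gamma_G\mathbf{W}}{b_G+\mathbf{W}}$, $g_T(\mathbf{W})=\frac{\gamma_T\mathbf{W}}{b_T+\mathbf{W}}$, $K_G(\mathbf{W})=\frac{c_G}{1+d_Ge^{-a_G\mathbf{W}}}$, $K_T(\mathbf{W})=\frac{c_T}{1+d_Te^{-a_T\mathbf{W}}}$, $\omega(G)=\frac{G^2}{G^2+\alpha^2}$, $\vartheta(T)=\lambda_{fT}^{min}+(\lambda_{fT}^{max}-\lambda_{fT}^{min})e^{-pT}$. Thresholds: $\mathcal{R}^1_{\mathbf{W}}=g_T(\mathbf{W})/\delta_T$, $\mathcal{R}^2_{\mathbf{W}}=g_G(\mathbf{W})/(\delta_G+\lambda_{fG}f)$, $T^*=K_T(\mathbf{W})(1-1/\mathcal{R}^1_{\mathbf{W}})$, $G^*=K_G(\mathbf{W})(1-1/\mathcal{R}^2_{\mathbf{W}})$, $\mathcal{R}_F=\frac{g_G(\mathbf{W})}{\eta_{TG}T^*+\delta_G+\lambda_{fG}f}$, $\mathcal{R}_G=\frac{g_T(\mathbf{W})}{\delta_T+\lambda_{fT}^{max}f\omega(G^* )}$. *)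

theory Defs
  imports "HOL-Analysis.Analysis"
begin

record params =
  gammaG :: real  gammaT :: real
  bG :: real  bT :: real
  cG :: real  cT :: real
  dG :: real  dT :: real
  aG :: real  aT :: real
  deltaG :: real  deltaT :: real
  etaTG :: real
  lamfG :: real
  lamfTmin :: real  lamfTmax :: real
  pp :: real
  alpha :: real

definition params_ok :: "params \<Rightarrow> bool" where
  "params_ok P \<longleftrightarrow> gammaG P > 0 \<and> gammaT P > 0 \<and> bG P > 0 \<and> bT P > 0 \<and>
     cG P > 0 \<and> cT P > 0 \<and> dG P > 0 \<and> dT P > 0 \<and> aG P > 0 \<and> aT P > 0 \<and>
     deltaG P > 0 \<and> deltaT P > 0 \<and> etaTG P > 0 \<and> lamfG P > 0 \<and>
     lamfTmin P > 0 \<and> lamfTmax P > 0 \<and> pp P > 0 \<and> alpha P > 0 \<and>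
     lamfTmin P < lamfTmax P"

definition gG :: "params \<Rightarrow> real \<Rightarrow> real" where
  "gG P W = gammaG P * W / (bG P + W)"
definition gT :: "params \<Rightarrow> real \<Rightarrow> real" where
  "gT P W = gammaT P * W / (bT P + W)"
definition KG :: "params \<Rightarrow> real \<Rightarrow> real" where
  "KG P W = cG P / (1 + dG P * exp (- aG P * W))"
definition KT :: "params \<Rightarrow> real \<Rightarrow> real" where
  "KT P W = cT P / (1 + dT P * exp (- aT P * W))"
definition omega :: "params \<Rightarrow> real \<Rightarrow> real" where
  "omega P G = G^2 / (G^2 + (alpha P)^2)"
definition vartheta :: "params \<Rightarrow> real \<Rightarrow> real" where
  "vartheta P T = lamfTmin P + (lamfTmax P - lamfTmin P) * exp (- pp P * T)"

definition R1W :: "params \<Rightarrow> real \<Rightarrow> real" where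
  "R1W P W = gT P W / deltaT P"
definition R2W :: "params \<Rightarrow> real \<Rightarrow> real \<Rightarrow> real" where
  "R2W P W f = gG P W / (deltaG P + lamfG P * f)"
definition Tstar :: "params \<Rightarrow> real \<Rightarrow> real" where
  "Tstar P W = KT P W * (1 - 1 / R1W P W)"
definition Gstar :: "params \<Rightarrow> real \<Rightarrow> real \<Rightarrow> real" where
  "Gstar P W f = KG P W * (1 - 1 / R2W P W f)"
definition RF :: "params \<Rightarrow> real \<Rightarrow> real \<Rightarrow> real" where
  "RF P W f = gG P W / (etaTG P * Tstar P W + deltaG P + lamfG P * f)"
definition RG :: "params \<Rightarrow> real \<Rightarrow> real \<Rightarrow> real" where
  "RG P W f = gT P W / (deltaT P + lamfTmax P * f * omega P (Gstar P W f))"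

definition field :: "params \<Rightarrow> real \<Rightarrow> real \<Rightarrow> real \<times> real \<Rightarrow> real \<times> real" where
  "field P W f z = (let G = fst z; T = snd z in
     (gG P W * G * (1 - G / KG P W) - deltaG P * G - etaTG P * T * G - lamfG P * f * G,
      gT P W * T * (1 - T / KT P W) - deltaT P * T - f * vartheta P T * omega P G * T))"

definition is_solution :: "(('a::real_normed_vector) \<Rightarrow> 'a) \<Rightarrow> 'a \<Rightarrow> (real \<Rightarrow> 'a) \<Rightarrow> bool" where
  "is_solution F x0 x \<longleftrightarrow> x 0 = x0 \<and>
     (\<forall>t\<ge>0. (x has_vector_derivative F (x t)) (at t within {0..}))"

definition lyapunov_stable :: "(('a::real_normed_vector) \<Rightarrow> 'a) \<Rightarrow> 'a \<Rightarrow> bool" where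
  "lyapunov_stable F e \<longleftrightarrow>
     (\<forall>\<epsilon>>0. \<exists>\<delta>>0. \<forall>x0 x. dist x0 e < \<delta> \<and> is_solution F x0 x \<longrightarrow>
        (\<forall>t\<ge>0. dist (x t) e < \<epsilon>))"

definition loc_asymp_stable :: "(('a::real_normed_vector) \<Rightarrow> 'a) \<Rightarrow> 'a \<Rightarrow> bool" where
  "loc_asymp_stable F e \<longleftrightarrow> F e = 0 \<and> lyapunov_stable F e \<and>
     (\<exists>\<delta>>0. \<forall>x0. dist x0 e < \<delta> \<longrightarrow>
        (\<exists>x. is_solution F x0 x) \<and> (\<forall>x. is_solution F x0 x \<longrightarrow> (x \<longlongrightarrow> e) at_top))"

end

theory Submission
  imports Defs
begin
lemma exists_solution:
  fixes G :: "real \<times> real \<Rightarrow> real \<times> real"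
  assumes lip: "L-lipschitz_on UNIV G" and L: "L > 0" and bnd: "\<And>z. norm (G z) \<le> M"
  shows "\<exists>x. is_solution G x0 x"
proof -
  define k where "k = 2*L"
  have k: "k > 0" using L by (simp add: k_def)
  have M: "M \<ge> 0" using bnd[of 0] norm_ge_zero[of "G 0"] by linarith
  have contG: "continuous_on UNIV G" using lipschitz_on_continuous_on[OF lip] .
  define g where "g y u = G (exp (k * u) *\<^sub>R apply_bcontfun y u)" for y :: "(real, real \<times> real) bcontfun" and u
  define I where "I y s = integral {0..s} (g y)" for y s
  have gcont: "continuous_on UNIV (g y)" for y
    unfolding g_def
    by (rule continuous_on_compose2[OF contG]) (auto intro!: continuous_intros)
  have loc: "at s within {0..s+1} = at s within {0..}" if "s \<ge> 0" for s :: real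
    by (rule at_within_nhd[of s "{..<s+1}"]) (use that in auto)
  have Ider: "((I y) has_vector_derivative g y s) (at s within {0..})" if "s \<ge> 0" for y s
  proof -
    have "((I y) has_vector_derivative g y s) (at s within {0..s+1})"
      unfolding I_def
      by (rule integral_has_vector_derivative[OF continuous_on_subset[OF gcont]]) (use that in auto)
    then show ?thesis using loc[OF that] by simp
  qed
  have Icont: "continuous_on {0..} (I y)" for y
    unfolding continuous_on_eq_continuous_within
    using Ider has_vector_derivative_continuous by (metis atLeast_iff)
  have Ibnd: "norm (I y s) \<le> M * s" if "s \<ge> 0" for y s
  proof -
    have "norm (I y s) \<le> integral {0..s} (\<lambda>_. M)"
      unfolding I_def
      by (rule integral_norm_bound_integral)
        (auto simp: g_def bnd intro!: integrable_continuous_interval continuous_on_subset[OF gcont[of y]])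
    also have "\<dots> = M * s" using that by simp
    finally show ?thesis .
  qed
  define Phif where "Phif y t = exp (-k * max 0 t) *\<^sub>R (x0 + I y (max 0 t))" for y t
  have Phif_mem: "Phif y \<in> bcontfun" for y
  proof (rule bcontfun_normI)
    show "continuous_on UNIV (Phif y)"
      unfolding Phif_def
      by (intro continuous_intros continuous_on_compose2[OF Icont[of y]]) auto
    fix t :: real
    define s where "s = max 0 t"
    have s: "s \<ge> 0" by (simp add: s_def)
    have e1: "exp (- k * s) \<le> 1" using s k by simp
    have "k * s < exp (k * s)" using exp_ge_add_one_self[of "k * s"] s k
      by (smt (verit) exp_ge_add_one_self)
    then have e2: "exp (- k * s) * s \<le> 1/k" using k
      by (simp add: exp_minus field_simps)
    have "norm (Phif y t) = exp (- k * s) * norm (x0 + I y s)" by (simp add: Phif_def s_def)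
    also have "\<dots> \<le> exp (- k * s) * (norm x0 + M * s)"
      by (intro mult_left_mono order.trans[OF norm_triangle_ineq]) (use Ibnd[OF s] in auto)
    also have "\<dots> = exp (- k * s) * norm x0 + M * (exp (- k * s) * s)" by (simp add: algebra_simps)
    also have "\<dots> \<le> norm x0 + M * (1/k)"
      by (intro add_mono mult_left_mono) (use e1 e2 M in \<open>auto intro: mult_left_le_one_le\<close>)
    finally show "norm (Phif y t) \<le> norm x0 + M * (1/k)" .
  qed
  define Phi where "Phi y = Bcontfun (Phif y)" for y
  have Phi_app: "apply_bcontfun (Phi y) t = Phif y t" for y t
    unfolding Phi_def using Phif_mem by (simp add: Bcontfun_inverse)
  have contr: "dist (Phi y1) (Phi y2) \<le> (1/2) * dist y1 y2" for y1 y2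
  proof (rule dist_bound)
    fix t :: real
    define s where "s = max 0 t"
    have s: "s \<ge> 0" by (simp add: s_def)
    define D where "D = dist y1 y2"
    have int1: "g y integrable_on {0..s}" for y
      by (rule integrable_continuous_interval) (use gcont continuous_on_subset in blast)
    have ptw: "norm (g y1 u - g y2 u) \<le> L * D * exp (k * u)" for u
    proof -
      have "norm (g y1 u - g y2 u) \<le> L * dist (exp (k * u) *\<^sub>R apply_bcontfun y1 u) (exp (k * u) *\<^sub>R apply_bcontfun y2 u)"
        unfolding g_def dist_norm[symmetric] by (rule lipschitz_onD[OF lip]) auto
      also have "\<dots> = L * (exp (k * u) * dist (apply_bcontfun y1 u) (apply_bcontfun y2 u))"
        by (simp add: dist_norm scaleR_diff_right[symmetric])
      also have "\<dots> \<le> L * (exp (k * u) * D)"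
        unfolding D_def using L by (intro mult_left_mono dist_bounded) auto
      finally show ?thesis by (simp add: algebra_simps)
    qed
    have eint: "((\<lambda>u. L * D * exp (k * u)) has_integral (L*D/k * exp (k * s) - L*D/k * exp (k*0))) {0..s}"
      by (rule fundamental_theorem_of_calculus[OF s])
        (use k in \<open>auto intro!: derivative_eq_intros simp: has_real_derivative_iff_has_vector_derivative[symmetric]\<close>)
    have "norm (I y1 s - I y2 s) = norm (integral {0..s} (\<lambda>u. g y1 u - g y2 u))"
      unfolding I_def using int1 by (simp add: integral_diff)
    also have "\<dots> \<le> integral {0..s} (\<lambda>u. L * D * exp (k * u))"
      by (rule integral_norm_bound_integral[OF integrable_diff[OF int1 int1]]) (use eint ptw in auto)
    also have "\<dots> = L*D/k * (exp (k * s) - 1)" using integral_unique[OF eint] by (simp add: algebra_simps)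
    finally have A: "norm (I y1 s - I y2 s) \<le> L*D/k * (exp (k * s) - 1)" .
    have "dist (apply_bcontfun (Phi y1) t) (apply_bcontfun (Phi y2) t) = exp (- k * s) * norm (I y1 s - I y2 s)"
      by (simp add: Phi_app Phif_def s_def dist_norm scaleR_diff_right[symmetric])
    also have "\<dots> \<le> exp (- k * s) * (L*D/k * (exp (k * s) - 1))"
      using A by (intro mult_left_mono) auto
    also have "\<dots> = L*D/k * (1 - exp (- k * s))"
      by (simp add: algebra_simps exp_minus)
    also have "\<dots> \<le> L*D/k"
      using L k by (intro mult_left_le) (auto simp: D_def)
    also have "\<dots> = (1/2) * dist y1 y2" using L by (simp add: k_def D_def)
    finally show "dist (apply_bcontfun (Phi y1) t) (apply_bcontfun (Phi y2) t) \<le> (1/2) * dist y1 y2" .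
  qed
  obtain y where fixp: "Phi y = y"
    using banach_fix_type[of "1/2" Phi] contr by auto
  define x where "x t = exp (k*t) *\<^sub>R apply_bcontfun y t" for t
  have gx: "g y u = G (x u)" for u by (simp add: g_def x_def)
  have xeq: "x t = x0 + I y t" if "t \<ge> 0" for t
  proof -
    have "apply_bcontfun y t = Phif y t" using fixp Phi_app by metis
    then show ?thesis using that by (simp add: x_def Phif_def exp_minus)
  qed
  have "is_solution G x0 x"
    unfolding is_solution_def
  proof (intro conjI allI impI)
    show "x 0 = x0" using xeq[of 0] by (simp add: I_def)
    fix t :: real assume t: "t \<ge> 0"
    have "((\<lambda>t. x0 + I y t) has_vector_derivative g y t) (at t within {0..})"
      using Ider[OF t] by (auto intro!: derivative_eq_intros)
    then show "(x has_vector_derivative G (x t)) (at t within {0..})"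
      unfolding gx by (rule has_vector_derivative_transform[rotated 2]) (use t xeq in auto)
  qed
  then show ?thesis by blast
qed

definition VV :: "real \<Rightarrow> real \<Rightarrow> real \<times> real \<Rightarrow> real \<times> real \<Rightarrow> real" where
  "VV A B e z = A * (fst z - fst e)^2 + B * (snd z - snd e)^2"
definition DV :: "real \<Rightarrow> real \<Rightarrow> real \<times> real \<Rightarrow> real \<times> real \<Rightarrow> real \<times> real \<Rightarrow> real" where
  "DV A B e z v = 2 * A * (fst z - fst e) * fst v + 2 * B * (snd z - snd e) * snd v"

lemma VV_nonneg: "A \<ge> 0 \<Longrightarrow> B \<ge> 0 \<Longrightarrow> VV A B e z \<ge> 0"
  by (simp add: VV_def)

lemma VV_deriv:
  assumes "(x has_vector_derivative v) (at t within S)"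
  shows "((\<lambda>t. VV A B e (x t)) has_real_derivative DV A B e (x t) v) (at t within S)"
  using assms
  unfolding VV_def DV_def has_real_derivative_iff_has_vector_derivative has_vector_derivative_def
  by (auto intro!: derivative_eq_intros simp: algebra_simps)

lemma lyap_decay:
  fixes H :: "real \<times> real \<Rightarrow> real \<times> real"
  assumes sol: "is_solution H x0 x" and A: "A > 0" and B: "B > 0" and m: "m > 0"
    and cond: "\<And>z. VV A B e z \<le> \<rho> \<Longrightarrow> DV A B e z (H z) \<le> - m * VV A B e z"
    and V0: "VV A B e x0 < \<rho>"
  shows "\<And>t. t \<ge> 0 \<Longrightarrow> VV A B e (x t) \<le> VV A B e x0 * exp (- m * t)"
proof -
  define \<phi> where "\<phi> t = VV A B e (x t)" for t
  define d where "d t = DV A B e (x t) (H (x t))" for t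
  have x0: "x 0 = x0" using sol by (simp add: is_solution_def)
  have der: "(\<phi> has_real_derivative d t) (at t within {0..})" if "t \<ge> 0" for t
    unfolding \<phi>_def d_def
    by (rule VV_deriv) (use sol that in \<open>auto simp: is_solution_def\<close>)
  have derat: "(\<phi> has_real_derivative d t) (at t)" if "t > 0" for t
  proof -
    have "at t within {0..} = at t"
      by (rule at_within_interior) (use that in auto)
    then show ?thesis using der[of t] that by simp
  qed
  have cont: "continuous_on {0..} \<phi>"
    unfolding continuous_on_eq_continuous_within
    using der DERIV_continuous by (metis atLeast_iff)
  have nn: "\<phi> t \<ge> 0" for t unfolding \<phi>_def using A B by (intro VV_nonneg) auto
  have dle: "d t \<le> - m * \<phi> t" if "\<phi> t \<le> \<rho>" for t
    using cond that unfolding d_def \<phi>_def by blast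
  define \<rho>' where "\<rho>' = (\<phi> 0 + \<rho>) / 2"
  have r1: "\<phi> 0 < \<rho>'" "\<rho>' < \<rho>" using V0 x0 by (auto simp: \<rho>'_def \<phi>_def)
  have step1: "\<phi> t < \<rho>'" if "t \<ge> 0" for t
  proof (rule ccontr)
    assume "\<not> \<phi> t < \<rho>'"
    define S where "S = {0..} \<inter> \<phi> -` {\<rho>'..}"
    have tS: "t \<in> S" using that \<open>\<not> \<phi> t < \<rho>'\<close> by (auto simp: S_def)
    have clS: "closed S" unfolding S_def
      by (rule continuous_closed_preimage[OF cont]) auto
    define ts where "ts = Inf S"
    have bdd: "bdd_below S" by (auto simp: S_def bdd_below_def)
    have tsS: "ts \<in> S" unfolding ts_def
      by (rule closed_contains_Inf[OF _ bdd clS]) (use tS in auto)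
    have ts0: "ts > 0"
    proof -
      have "ts \<ge> 0" using tsS by (auto simp: S_def)
      moreover have "ts \<noteq> 0" using tsS r1 by (auto simp: S_def)
      ultimately show ?thesis by simp
    qed
    have below: "\<phi> s < \<rho>'" if "0 \<le> s" "s < ts" for s
    proof (rule ccontr)
      assume "\<not> \<phi> s < \<rho>'"
      then have "s \<in> S" using that by (auto simp: S_def)
      then have "ts \<le> s" unfolding ts_def using bdd by (rule cInf_lower)
      then show False using that by simp
    qed
    obtain l z where lz: "0 < z" "z < ts" "DERIV \<phi> z :> l" "\<phi> ts - \<phi> 0 = (ts - 0) * l"
      using MVT[OF ts0 continuous_on_subset[OF cont]] derat real_differentiable_def
      by (smt (verit, del_insts) atLeastAtMost_iff atLeast_iff subsetI)
    have "l = d z" using DERIV_unique[OF lz(3) derat[OF lz(1)]] .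
    also have "\<dots> \<le> - m * \<phi> z" using dle below[of z] lz r1 by auto
    also have "\<dots> \<le> 0" using m nn[of z] by simp
    finally have "ts * l \<le> 0" using ts0 by (intro mult_nonneg_nonpos) auto
    then have "\<phi> ts \<le> \<phi> 0" using lz(4) by simp
    then show False using tsS r1 by (auto simp: S_def)
  qed
  define \<psi> where "\<psi> t = \<phi> t * exp (m * t)" for t
  have derpsi: "(\<psi> has_real_derivative (d t * exp (m*t) + \<phi> t * (m * exp (m*t)))) (at t)" if "t > 0" for t
    unfolding \<psi>_def by (auto intro!: derivative_eq_intros derat[OF that])
  have psicont: "continuous_on {0..} \<psi>"
    unfolding \<psi>_def by (intro continuous_intros cont)
  have psidec: "\<psi> t \<le> \<psi> 0" if "t \<ge> 0" for t
  proof (cases "t = 0")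
    case False
    then have t0: "t > 0" using that by simp
    obtain l z where lz: "0 < z" "z < t" "DERIV \<psi> z :> l" "\<psi> t - \<psi> 0 = (t - 0) * l"
      using MVT[OF t0 continuous_on_subset[OF psicont]] derpsi real_differentiable_def
      by (smt (verit, del_insts) atLeastAtMost_iff atLeast_iff subsetI)
    have "l = d z * exp (m*z) + \<phi> z * (m * exp (m*z))" using DERIV_unique[OF lz(3) derpsi[OF lz(1)]] .
    also have "\<dots> = (d z + m * \<phi> z) * exp (m*z)" by (simp add: algebra_simps)
    also have "\<dots> \<le> 0"
      using dle[of z] step1[of z] r1 lz by (intro mult_nonpos_nonneg) auto
    finally have "t * l \<le> 0" using t0 by (intro mult_nonneg_nonpos) auto
    then show ?thesis using lz(4) by simp
  qed simp
  fix t :: real assume t: "t \<ge> 0"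
  have "\<phi> t * exp (m * t) \<le> \<phi> 0" using psidec[OF t] by (simp add: \<psi>_def)
  then have "\<phi> t \<le> \<phi> 0 * exp (- m * t)"
    by (simp add: exp_minus field_simps)
  then show "VV A B e (x t) \<le> VV A B e x0 * exp (- m * t)" using x0 by (simp add: \<phi>_def)
qed

lemma dist_sq: "(dist z e)^2 = (fst z - fst e)^2 + (snd z - snd e)^2" for z e :: "real \<times> real"
  by (cases z; cases e) (simp add: dist_Pair_Pair dist_real_def)

lemma VV_bounds:
  assumes "A > 0" "B > 0"
  shows "min A B * (dist z e)^2 \<le> VV A B e z" "VV A B e z \<le> max A B * (dist z e)^2"
proof -
  have a: "(fst z - fst e)^2 \<ge> 0" "(snd z - snd e)^2 \<ge> 0" by auto
  show "min A B * (dist z e)^2 \<le> VV A B e z"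
    unfolding dist_sq VV_def using a
    by (simp add: distrib_left add_mono mult_right_mono)
  show "VV A B e z \<le> max A B * (dist z e)^2"
    unfolding dist_sq VV_def using a
    by (simp add: distrib_left add_mono mult_right_mono)
qed

lemma VV_small:
  assumes A: "A > 0" and B: "B > 0" and mu: "\<mu> > 0"
    and d: "dist z e < \<mu> * min A B / (2 * max A B)"
  shows "VV A B e z < min A B * \<mu>^2"
proof -
  define c where "c = min A B"
  define C where "C = max A B"
  have c: "c > 0" "c \<le> C" using A B by (auto simp: c_def C_def)
  have "VV A B e z \<le> C * (dist z e)^2" using VV_bounds[OF A B] by (simp add: C_def)
  also have "\<dots> \<le> C * (\<mu> * c / (2*C))^2"
    using d c by (intro mult_left_mono power_mono) (auto simp: c_def C_def)
  also have "\<dots> = \<mu>^2 * c * (c / C) / 4" using c by (simp add: field_simps power2_eq_square)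
  also have "\<dots> \<le> \<mu>^2 * c * 1 / 4" using c mu by (intro divide_right_mono mult_left_mono) auto
  also have "\<dots> < c * \<mu>^2" using c mu by simp
  finally show ?thesis by (simp add: c_def)
qed

lemma VV_dist:
  assumes A: "A > 0" and B: "B > 0" and mu: "\<mu> > 0"
    and V: "VV A B e z \<le> min A B * \<mu>^2"
  shows "dist z e \<le> \<mu>"
proof -
  have c: "min A B > 0" using A B by simp
  have "min A B * (dist z e)^2 \<le> min A B * \<mu>^2" using VV_bounds(1)[OF A B, of z e] V by linarith
  then have "(dist z e)^2 \<le> \<mu>^2" using c by simp
  then show ?thesis using mu by (simp add: power2_le_iff_abs_le)
qed

theorem abstract_las:
  fixes F :: "real \<times> real \<Rightarrow> real \<times> real"
  assumes A: "A > 0" and B: "B > 0" and m: "m > 0" and r: "r > 0"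
    and lip: "Lf-lipschitz_on (cball e r) F"
    and Fe: "F e = 0"
    and cond: "\<And>z. z \<in> cball e r \<Longrightarrow> DV A B e z (F z) \<le> - m * VV A B e z"
  shows "loc_asymp_stable F e"
proof -
  define c where "c = min A B"
  define C where "C = max A B"
  have c: "c > 0" "c \<le> C" using A B by (auto simp: c_def C_def)
  define \<rho> where "\<rho> = c * r^2"
  have inball: "z \<in> cball e r" if "VV A B e z \<le> \<rho>" for z
    using VV_dist[OF A B r, of e z] that by (auto simp: \<rho>_def c_def dist_commute)
  have cond': "DV A B e z (F z) \<le> - m * VV A B e z" if "VV A B e z \<le> \<rho>" for z
    using cond inball that by blast
  have decay: "VV A B e (x t) \<le> VV A B e x0 * exp (- m * t)"
    if "is_solution F x0 x" "VV A B e x0 < \<rho>" "t \<ge> 0" for x0 x t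
    using lyap_decay[OF that(1) A B m cond' that(2) that(3)] .
  have decay1: "VV A B e (x t) \<le> VV A B e x0"
    if "is_solution F x0 x" "VV A B e x0 < \<rho>" "t \<ge> 0" for x0 x t
  proof -
    have "VV A B e x0 * exp (- m * t) \<le> VV A B e x0 * 1"
      using that m VV_nonneg[of A B] A B by (intro mult_left_mono) auto
    then show ?thesis using decay[OF that] by simp
  qed
  define \<delta>0 where "\<delta>0 = r * c / (2 * C)"
  have \<delta>0: "\<delta>0 > 0" using c r by (simp add: \<delta>0_def)
  have V0: "VV A B e x0 < \<rho>" if "dist x0 e < \<delta>0" for x0
    using VV_small[OF A B r, of x0 e] that by (simp add: \<delta>0_def \<rho>_def c_def C_def)
  have stab: "lyapunov_stable F e"
    unfolding lyapunov_stable_def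
  proof (intro allI impI)
    fix \<epsilon> :: real assume eps: "\<epsilon> > 0"
    define \<mu> where "\<mu> = min r \<epsilon> / 2"
    have mu: "\<mu> > 0" "\<mu> < \<epsilon>" "\<mu> \<le> r" using eps r by (auto simp: \<mu>_def)
    define \<delta> where "\<delta> = \<mu> * c / (2 * C)"
    have \<delta>: "\<delta> > 0" using mu c by (simp add: \<delta>_def)
    have "\<forall>x0 x. dist x0 e < \<delta> \<and> is_solution F x0 x \<longrightarrow> (\<forall>t\<ge>0. dist (x t) e < \<epsilon>)"
    proof (intro allI impI)
      fix x0 x t assume H: "dist x0 e < \<delta> \<and> is_solution F x0 x" and t: "(t::real) \<ge> 0"
      have "\<delta> \<le> \<delta>0" using mu c by (simp add: \<delta>_def \<delta>0_def divide_right_mono mult_right_mono)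
      then have v0: "VV A B e x0 < \<rho>" using V0 H by simp
      have "VV A B e x0 < c * \<mu>^2"
        using VV_small[OF A B mu(1), of x0 e] H by (simp add: \<delta>_def c_def C_def)
      then have "VV A B e (x t) \<le> min A B * \<mu>^2" using decay1[OF _ v0 t, of x] H by (simp add: c_def)
      then have "dist (x t) e \<le> \<mu>" by (rule VV_dist[OF A B mu(1)])
      then show "dist (x t) e < \<epsilon>" using mu by simp
    qed
    then show "\<exists>\<delta>>0. \<forall>x0 x. dist x0 e < \<delta> \<and> is_solution F x0 x \<longrightarrow> (\<forall>t\<ge>0. dist (x t) e < \<epsilon>)"
      using \<delta> by blast
  qed
  have conv: "(x \<longlongrightarrow> e) at_top" if sol: "is_solution F x0 x" and d: "dist x0 e < \<delta>0" for x0 x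
  proof -
    have v0: "VV A B e x0 < \<rho>" using V0 d by simp
    have lim: "((\<lambda>t. sqrt (VV A B e x0 * exp (- m * t) / c)) \<longlongrightarrow> 0) at_top"
    proof -
      have "filterlim (\<lambda>t. - m * t) at_bot at_top"
        using filterlim_tendsto_neg_mult_at_bot[of "\<lambda>_. - m" "- m" at_top "\<lambda>t. t"] m
        by (simp add: filterlim_ident)
      then have "((\<lambda>t. exp (- m * t)) \<longlongrightarrow> 0) at_top"
        by (rule filterlim_compose[OF exp_at_bot])
      then have "((\<lambda>t. sqrt (VV A B e x0 * exp (- m * t) / c)) \<longlongrightarrow> sqrt (VV A B e x0 * 0 / c)) at_top"
        using c by (intro tendsto_intros) auto
      then show ?thesis by simp
    qed
    have ev: "\<forall>\<^sub>F t in at_top. dist (x t) e \<le> sqrt (VV A B e x0 * exp (- m * t) / c)"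
    proof (rule eventually_at_top_linorderI[of 0])
      fix t :: real assume t: "t \<ge> 0"
      have "c * (dist (x t) e)^2 \<le> VV A B e (x t)" using VV_bounds(1)[OF A B] by (simp add: c_def)
      also have "\<dots> \<le> VV A B e x0 * exp (- m * t)" using decay[OF sol v0 t] .
      finally have "(dist (x t) e)^2 \<le> VV A B e x0 * exp (- m * t) / c"
        using c by (simp add: field_simps)
      then show "dist (x t) e \<le> sqrt (VV A B e x0 * exp (- m * t) / c)"
        by (simp add: real_le_rsqrt)
    qed
    have "((\<lambda>t. dist (x t) e) \<longlongrightarrow> 0) at_top"
      by (rule tendsto_sandwich[OF _ ev tendsto_const lim]) auto
    then show ?thesis using tendsto_dist_iff[of x e at_top] by simp
  qed
  define P where "P = closest_point (cball e r)"
  have Pin: "P z \<in> cball e r" for z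
    unfolding P_def by (rule closest_point_in_set) (use r in auto)
  have Pself: "P z = z" if "z \<in> cball e r" for z
    unfolding P_def using that by (rule closest_point_self)
  have Plip: "1-lipschitz_on UNIV P"
    unfolding P_def
    by (rule lipschitz_onI) (use r in \<open>auto intro: closest_point_lipschitz\<close>)
  define Ft where "Ft z = F (P z)" for z
  have Lf0: "Lf \<ge> 0" using lipschitz_on_nonneg[OF lip] .
  have Ftlip: "(Lf + 1)-lipschitz_on UNIV Ft"
  proof -
    have "(Lf * 1)-lipschitz_on UNIV (\<lambda>z. F (P z))"
      by (rule lipschitz_on_compose2[OF Plip lipschitz_on_subset[OF lip]]) (use Pin in auto)
    then show ?thesis unfolding Ft_def by (rule lipschitz_on_mono) auto
  qed
  have Ftbnd: "norm (Ft z) \<le> Lf * r" for z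
  proof -
    have "norm (Ft z) = dist (F (P z)) (F e)" by (simp add: Ft_def Fe dist_norm)
    also have "\<dots> \<le> Lf * dist (P z) e" by (rule lipschitz_onD[OF lip]) (use Pin r in auto)
    also have "\<dots> \<le> Lf * r" using Pin[of z] Lf0 by (intro mult_left_mono) (auto simp: dist_commute)
    finally show ?thesis .
  qed
  have ex: "\<exists>x. is_solution F x0 x" if d: "dist x0 e < \<delta>0" for x0
  proof -
    obtain x where sol: "is_solution Ft x0 x"
      using exists_solution[OF Ftlip _ Ftbnd] Lf0 by fastforce
    have v0: "VV A B e x0 < \<rho>" using V0 d by simp
    have condt: "DV A B e z (Ft z) \<le> - m * VV A B e z" if "VV A B e z \<le> \<rho>" for z
      using cond'[OF that] Pself[OF inball[OF that]] by (simp add: Ft_def)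
    have xin: "x t \<in> cball e r" if "t \<ge> 0" for t
    proof -
      have "VV A B e (x t) \<le> VV A B e x0 * exp (- m * t)"
        using lyap_decay[OF sol A B m condt v0 that] .
      also have "\<dots> \<le> VV A B e x0 * 1"
        using that m VV_nonneg[of A B] A B by (intro mult_left_mono) auto
      finally show ?thesis using v0 inball by simp
    qed
    have "is_solution F x0 x"
      using sol xin Pself unfolding is_solution_def Ft_def by simp
    then show ?thesis by blast
  qed
  show ?thesis
    unfolding loc_asymp_stable_def
    using Fe stab \<delta>0 ex conv by blast
qed

definition omegad :: "params \<Rightarrow> real \<Rightarrow> real" where
  "omegad P x = 2 * x * (alpha P)^2 / (x^2 + (alpha P)^2)^2"
definition varthetad :: "params \<Rightarrow> real \<Rightarrow> real" where
  "varthetad P x = - (lamfTmax P - lamfTmin P) * pp P * exp (- pp P * x)"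

lemma omega_deriv:
  assumes "alpha P \<noteq> 0"
  shows "(omega P has_real_derivative omegad P x) (at x)"
proof -
  have pos: "x^2 + (alpha P)^2 \<noteq> 0" using assms by (simp add: add_nonneg_pos)
  have "((\<lambda>x. x^2 / (x^2 + (alpha P)^2)) has_real_derivative
     ((2 * x) * (x^2 + (alpha P)^2) - x^2 * (2 * x)) / ((x^2 + (alpha P)^2) * (x^2 + (alpha P)^2))) (at x)"
    by (rule DERIV_divide) (auto intro!: derivative_eq_intros simp: pos assms)
  moreover have "((2 * x) * (x^2 + (alpha P)^2) - x^2 * (2 * x)) / ((x^2 + (alpha P)^2) * (x^2 + (alpha P)^2)) = omegad P x"
    unfolding omegad_def by (simp add: power2_eq_square algebra_simps)
  ultimately show ?thesis unfolding omega_def by simp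
qed

lemma vartheta_deriv: "(vartheta P has_real_derivative varthetad P x) (at x)"
  unfolding vartheta_def varthetad_def
  by (auto intro!: derivative_eq_intros simp: algebra_simps)

lemma aux2:
  fixes g K T h1 h2 d f v w od vd :: real
  assumes "K \<noteq> 0"
  shows "g * h2 * (1 - T / K) - g * T * h2 / K - d * h2 -
        (f * v * w * h2 + (f * v * (h1 * od) + f * (h2 * vd) * w) * T) =
        (g - 2 * g * T / K - d - f * w * (v + T * vd)) * h2 - f * v * T * od * h1"
  using assms by (simp add: field_simps)

lemma raw1:
  fixes g K G T h1 h2 d e l f :: real
  assumes "K \<noteq> 0"
  shows "g * G * (0 - (h1 * K - G * 0) / (K * K)) + g * h1 * (1 - G / K) - d * h1 - (e * T * h1 + e * h2 * G) - l * f * h1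
     = (g - 2 * g * G / K - d - e * T - l * f) * h1 + (- e * G) * h2"
  using assms by (simp add: field_simps)

lemma raw2:
  fixes g K T h1 h2 d f v w od vd :: real
  assumes "K \<noteq> 0"
  shows "(g * T * (0 - (h2 * K - T * 0) / (K * K)) + g * h2 * (1 - T / K) - d * h2)
        - ((f * v) * w * h2 + ((f * v) * (h1 * od) + f * (h2 * vd) * w) * T)
     = (- f * v * T * od) * h1 + (g - 2 * g * T / K - d - f * w * (v + T * vd)) * h2"
  using assms by (simp add: field_simps)

lemma field_deriv:
  assumes "alpha P \<noteq> 0" "KG P W \<noteq> 0" "KT P W \<noteq> 0"
  shows "(field P W f has_derivative (\<lambda>h.
     ((gG P W - 2 * gG P W * fst z / KG P W - deltaG P - etaTG P * snd z - lamfG P * f) * fst h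
        + (- etaTG P * fst z) * snd h,
      (- f * vartheta P (snd z) * snd z * omegad P (fst z)) * fst h
        + (gT P W - 2 * gT P W * snd z / KT P W - deltaT P
           - f * omega P (fst z) * (vartheta P (snd z) + snd z * varthetad P (snd z))) * snd h))) (at z)"
proof -
  have hs: "((\<lambda>z. snd z) has_derivative (\<lambda>h. snd h)) (at z)"
    by (rule has_derivative_snd[OF has_derivative_ident])
  have hf: "((\<lambda>z. fst z) has_derivative (\<lambda>h. fst h)) (at z)"
    by (rule has_derivative_fst[OF has_derivative_ident])
  have d1raw: "((\<lambda>z. gG P W * fst z * (1 - fst z / KG P W) - deltaG P * fst z - etaTG P * snd z * fst z - lamfG P * f * fst z)
      has_derivative (\<lambda>h. gG P W * fst z * (0 - (fst h * KG P W - fst z * 0) / (KG P W * KG P W)) + gG P W * fst h * (1 - fst z / KG P W) - deltaG P * fst h - (etaTG P * snd z * fst h + etaTG P * snd h * fst z) - lamfG P * f * fst h)) (at z)"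
    by (auto intro!: derivative_eq_intros simp: assms)
  have hv: "((\<lambda>z. f * vartheta P (snd z)) has_derivative (\<lambda>h. f * (snd h * varthetad P (snd z)))) (at z)"
    by (rule has_derivative_mult_right[OF DERIV_compose_FDERIV[OF vartheta_deriv hs]])
  have ho: "((\<lambda>z. omega P (fst z)) has_derivative (\<lambda>h. fst h * omegad P (fst z))) (at z)"
    by (rule DERIV_compose_FDERIV[OF omega_deriv[OF assms(1)] hf])
  have hvo: "((\<lambda>z. f * vartheta P (snd z) * omega P (fst z)) has_derivative
     (\<lambda>h. f * vartheta P (snd z) * (fst h * omegad P (fst z)) + f * (snd h * varthetad P (snd z)) * omega P (fst z))) (at z)"
    by (rule has_derivative_mult[OF hv ho])
  have hvos: "((\<lambda>z. f * vartheta P (snd z) * omega P (fst z) * snd z) has_derivative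
     (\<lambda>h. f * vartheta P (snd z) * omega P (fst z) * snd h + (f * vartheta P (snd z) * (fst h * omegad P (fst z)) + f * (snd h * varthetad P (snd z)) * omega P (fst z)) * snd z)) (at z)"
    by (rule has_derivative_mult[OF hvo hs])
  have hpoly: "((\<lambda>z. gT P W * snd z * (1 - snd z / KT P W) - deltaT P * snd z)
      has_derivative (\<lambda>h. gT P W * snd z * (0 - (snd h * KT P W - snd z * 0) / (KT P W * KT P W)) + gT P W * snd h * (1 - snd z / KT P W) - deltaT P * snd h)) (at z)"
    by (auto intro!: derivative_eq_intros simp: assms)
  have d2raw: "((\<lambda>z. gT P W * snd z * (1 - snd z / KT P W) - deltaT P * snd z - f * vartheta P (snd z) * omega P (fst z) * snd z)
      has_derivative (\<lambda>h. (gT P W * snd z * (0 - (snd h * KT P W - snd z * 0) / (KT P W * KT P W)) + gT P W * snd h * (1 - snd z / KT P W) - deltaT P * snd h)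
        - (f * vartheta P (snd z) * omega P (fst z) * snd h + (f * vartheta P (snd z) * (fst h * omegad P (fst z)) + f * (snd h * varthetad P (snd z)) * omega P (fst z)) * snd z))) (at z)"
    by (rule has_derivative_diff[OF hpoly hvos])
  have "((\<lambda>z. (gG P W * fst z * (1 - fst z / KG P W) - deltaG P * fst z - etaTG P * snd z * fst z - lamfG P * f * fst z,
      gT P W * snd z * (1 - snd z / KT P W) - deltaT P * snd z - f * vartheta P (snd z) * omega P (fst z) * snd z))
      has_derivative (\<lambda>h. (gG P W * fst z * (0 - (fst h * KG P W - fst z * 0) / (KG P W * KG P W)) + gG P W * fst h * (1 - fst z / KG P W) - deltaG P * fst h - (etaTG P * snd z * fst h + etaTG P * snd h * fst z) - lamfG P * f * fst h,
         (gT P W * snd z * (0 - (snd h * KT P W - snd z * 0) / (KT P W * KT P W)) + gT P W * snd h * (1 - snd z / KT P W) - deltaT P * snd h)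
        - (f * vartheta P (snd z) * omega P (fst z) * snd h + (f * vartheta P (snd z) * (fst h * omegad P (fst z)) + f * (snd h * varthetad P (snd z)) * omega P (fst z)) * snd z)))) (at z)"
    by (rule has_derivative_Pair[OF d1raw d2raw])
  then show ?thesis
    unfolding raw1[OF assms(2)] raw2[OF assms(3)] field_def Let_def .
qed

lemma lip_from_deriv:
  fixes F :: "real \<times> real \<Rightarrow> real \<times> real"
  assumes der: "\<And>z. (F has_derivative (\<lambda>h. (a z * fst h + b z * snd h, c z * fst h + d z * snd h))) (at z)"
    and ca: "continuous_on UNIV a" and cb: "continuous_on UNIV b"
    and cc: "continuous_on UNIV c" and cd: "continuous_on UNIV d"
  shows "\<exists>L. L-lipschitz_on (cball e r) F"
proof -
  define S where "S z = \<bar>a z\<bar> + \<bar>b z\<bar> + \<bar>c z\<bar> + \<bar>d z\<bar>" for z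
  have cS: "continuous_on (cball e r) S"
    unfolding S_def by (intro continuous_intros continuous_on_subset[OF ca] continuous_on_subset[OF cb]
        continuous_on_subset[OF cc] continuous_on_subset[OF cd]) auto
  have "bounded (S ` cball e r)"
    by (rule compact_imp_bounded[OF compact_continuous_image[OF cS compact_cball]])
  then obtain K where K: "\<And>z. z \<in> cball e r \<Longrightarrow> norm (S z) \<le> K"
    unfolding bounded_iff by blast
  define C where "C = max K 0"
  have "C-lipschitz_on (cball e r) F"
  proof (rule bounded_derivative_imp_lipschitz)
    show "\<And>x. x \<in> cball e r \<Longrightarrow>
         (F has_derivative (\<lambda>h. (a x * fst h + b x * snd h, c x * fst h + d x * snd h))) (at x within cball e r)"
      by (rule has_derivative_at_withinI[OF der])
    show "convex (cball e r)" by simp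
    show "0 \<le> C" by (simp add: C_def)
    fix x assume x: "x \<in> cball e r"
    show "onorm (\<lambda>h. (a x * fst h + b x * snd h, c x * fst h + d x * snd h)) \<le> C"
    proof (rule onorm_le)
      fix h :: "real \<times> real"
      have h1: "\<bar>fst h\<bar> \<le> norm h" using norm_fst_le[of "fst h" "snd h"] by simp
      have h2: "\<bar>snd h\<bar> \<le> norm h" using norm_snd_le[of "snd h" "fst h"] by simp
      have "norm (a x * fst h + b x * snd h, c x * fst h + d x * snd h)
          \<le> \<bar>a x * fst h + b x * snd h\<bar> + \<bar>c x * fst h + d x * snd h\<bar>"
        using norm_Pair_le[of "a x * fst h + b x * snd h" "c x * fst h + d x * snd h"] by simp
      also have "\<dots> \<le> (\<bar>a x\<bar> * \<bar>fst h\<bar> + \<bar>b x\<bar> * \<bar>snd h\<bar>) + (\<bar>c x\<bar> * \<bar>fst h\<bar> + \<bar>d x\<bar> * \<bar>snd h\<bar>)"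
        by (intro add_mono order.trans[OF abs_triangle_ineq]) (auto simp: abs_mult)
      also have "\<dots> \<le> (\<bar>a x\<bar> * norm h + \<bar>b x\<bar> * norm h) + (\<bar>c x\<bar> * norm h + \<bar>d x\<bar> * norm h)"
        by (intro add_mono mult_left_mono h1 h2) auto
      also have "\<dots> = S x * norm h" by (simp add: S_def algebra_simps)
      also have "\<dots> \<le> C * norm h"
        using K[OF x] by (intro mult_right_mono) (auto simp: C_def)
      finally show "norm (a x * fst h + b x * snd h, c x * fst h + d x * snd h) \<le> C * norm h" .
    qed
  qed
  then show ?thesis by blast
qed

lemma KG_pos: "params_ok P \<Longrightarrow> KG P W > 0"
  unfolding params_ok_def KG_def by (simp add: add_pos_pos)
lemma KT_pos: "params_ok P \<Longrightarrow> KT P W > 0"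
  unfolding params_ok_def KT_def by (simp add: add_pos_pos)

lemma field_lip:
  assumes "params_ok P"
  shows "\<exists>L. L-lipschitz_on (cball e r) (field P W f)"
proof -
  have al: "alpha P \<noteq> 0" using assms by (simp add: params_ok_def)
  have nz: "(x::real)^2 + (alpha P)^2 \<noteq> 0" for x using al by (simp add: add_nonneg_pos)
  show ?thesis
  proof (rule lip_from_deriv[OF field_deriv[OF al KG_pos[OF assms, THEN less_imp_neq, symmetric] KT_pos[OF assms, THEN less_imp_neq, symmetric]]])
    show "continuous_on UNIV (\<lambda>z. gG P W - 2 * gG P W * fst z / KG P W - deltaG P - etaTG P * snd z - lamfG P * f)"
      using KG_pos[OF assms, of W] by (intro continuous_intros) auto
    show "continuous_on UNIV (\<lambda>z::real\<times>real. - etaTG P * fst z)"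
      by (intro continuous_intros)
    show "continuous_on UNIV (\<lambda>z. - f * vartheta P (snd z) * snd z * omegad P (fst z))"
      unfolding vartheta_def omegad_def by (intro continuous_intros) (auto simp: nz al)
    show "continuous_on UNIV (\<lambda>z. gT P W - 2 * gT P W * snd z / KT P W - deltaT P -
           f * omega P (fst z) * (vartheta P (snd z) + snd z * varthetad P (snd z)))"
      unfolding vartheta_def varthetad_def omega_def using KT_pos[OF assms, of W] by (intro continuous_intros) (auto simp: nz al)
  qed
qed

lemma alg:
  fixes u p al be ga a0 b0 g0 K :: real
  assumes a0: "a0 > 0" and g0: "g0 > 0" and al: "al \<ge> a0" and be: "\<bar>be\<bar> \<le> b0" and ga: "ga \<le> - g0"
    and K: "K = b0^2 / (a0 * g0) + 1"
  shows "2 * K * p * (ga * p) + 2 * u * (- al * u + be * p) \<le> - min a0 g0 * (K * p^2 + u^2)"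
proof -
  have b0: "b0 \<ge> 0" using be by linarith
  have Kpos: "K > 0" using K a0 g0 by (simp add: add_nonneg_pos)
  have Kg: "K * g0 = b0^2 / a0 + g0" using K a0 g0 by (simp add: field_simps)
  have sq: "0 \<le> (a0 * \<bar>u\<bar> - b0 * \<bar>p\<bar>)^2 / a0" using a0 by simp
  have sq2: "(a0 * \<bar>u\<bar> - b0 * \<bar>p\<bar>)^2 / a0 = a0 * u^2 - 2 * b0 * \<bar>u\<bar> * \<bar>p\<bar> + b0^2 / a0 * p^2"
    using a0 by (simp add: field_simps power2_eq_square)
  have h1: "2 * u * (be * p) \<le> a0 * u^2 + b0^2 / a0 * p^2"
  proof -
    have "2 * u * (be * p) \<le> 2 * (\<bar>u\<bar> * \<bar>be\<bar> * \<bar>p\<bar>)"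
      by (simp add: abs_mult[symmetric] mult.assoc)
    also have "\<dots> \<le> 2 * (\<bar>u\<bar> * b0 * \<bar>p\<bar>)"
      using be by (intro mult_left_mono mult_right_mono) auto
    finally show ?thesis using sq sq2 by (simp add: algebra_simps)
  qed
  have h2: "- 2 * al * u^2 \<le> - 2 * a0 * u^2" using al by (simp add: mult_right_mono)
  have h3: "2 * K * ga * p^2 \<le> - 2 * K * g0 * p^2"
  proof -
    have "K * ga * p^2 \<le> K * (- g0) * p^2"
      using ga Kpos by (intro mult_right_mono mult_left_mono) auto
    then show ?thesis by simp
  qed
  have "2 * K * p * (ga * p) + 2 * u * (- al * u + be * p)
      = 2 * K * ga * p^2 + (- 2 * al * u^2) + 2 * u * (be * p)"
    by (simp add: algebra_simps power2_eq_square)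
  also have "\<dots> \<le> - 2 * K * g0 * p^2 + (- 2 * a0 * u^2) + (a0 * u^2 + b0^2 / a0 * p^2)"
    using h1 h2 h3 by linarith
  also have "\<dots> = - a0 * u^2 - (K * g0) * p^2 - g0 * p^2"
  proof -
    have bb: "b0^2 / a0 * p^2 = (K * g0 - g0) * p^2" using Kg by simp
    show ?thesis unfolding bb by (simp add: algebra_simps)
  qed
  also have "\<dots> \<le> - a0 * u^2 - (K * g0) * p^2" using g0 by simp
  also have "\<dots> \<le> - min a0 g0 * (K * p^2 + u^2)"
  proof -
    have "min a0 g0 * u^2 \<le> a0 * u^2" by (intro mult_right_mono) auto
    moreover have "min a0 g0 * (K * p^2) \<le> g0 * (K * p^2)" using Kpos by (intro mult_right_mono) auto
    ultimately show ?thesis by (simp add: algebra_simps)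
  qed
  finally show ?thesis .
qed

lemma cont_bounds:
  fixes al be ga :: "real \<times> real \<Rightarrow> real"
  assumes ca: "isCont al e" and cb: "isCont be e" and cg: "isCont ga e"
    and pa: "al e > 0" and pg: "ga e < 0"
  obtains r where "r > 0" "\<And>z. z \<in> cball e r \<Longrightarrow> al z \<ge> al e / 2 \<and> \<bar>be z\<bar> \<le> \<bar>be e\<bar> + 1 \<and> ga z \<le> ga e / 2"
proof -
  obtain d1 where d1: "d1 > 0" "\<And>z. dist z e < d1 \<Longrightarrow> dist (al z) (al e) < al e / 2"
    using ca pa unfolding continuous_at_eps_delta by (metis half_gt_zero)
  obtain d2 where d2: "d2 > 0" "\<And>z. dist z e < d2 \<Longrightarrow> dist (be z) (be e) < 1"
    using cb unfolding continuous_at_eps_delta by (metis zero_less_one)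
  obtain d3 where d3: "d3 > 0" "\<And>z. dist z e < d3 \<Longrightarrow> dist (ga z) (ga e) < - ga e / 2"
    using cg pg unfolding continuous_at_eps_delta by (metis half_gt_zero neg_0_less_iff_less)
  define r where "r = min d1 (min d2 d3) / 2"
  have r: "r > 0" using d1 d2 d3 by (simp add: r_def)
  show ?thesis
  proof (rule that[OF r])
    fix z assume "z \<in> cball e r"
    then have dz: "dist z e < d1" "dist z e < d2" "dist z e < d3"
      using r d1 d2 d3 by (auto simp: r_def dist_commute)
    show "al z \<ge> al e / 2 \<and> \<bar>be z\<bar> \<le> \<bar>be e\<bar> + 1 \<and> ga z \<le> ga e / 2"
    proof -
      have A: "\<bar>al z - al e\<bar> < al e / 2" "\<bar>be z - be e\<bar> < 1" "\<bar>ga z - ga e\<bar> < - ga e / 2"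
        using d1(2)[OF dz(1)] d2(2)[OF dz(2)] d3(2)[OF dz(3)] by (simp_all only: dist_real_def)
      have B1: "al e / 2 \<le> al z" using A(1) unfolding abs_less_iff by linarith
      have B2: "ga z \<le> ga e / 2" using A(3) unfolding abs_less_iff by linarith
      have B3: "\<bar>be z\<bar> \<le> \<bar>be e\<bar> + 1" using A(2) abs_triangle_ineq2[of "be z" "be e"] by linarith
      show ?thesis using B1 B2 B3 by blast
    qed
  qed
qed

lemma lyap_order1:
  fixes F :: "real \<times> real \<Rightarrow> real \<times> real"
  assumes Ffst: "\<And>z. fst (F z) = ga z * (fst z - fst e)"
    and Fsnd: "\<And>z. snd (F z) = - al z * (snd z - snd e) + be z * (fst z - fst e)"
    and ca: "isCont al e" and cb: "isCont be e" and cg: "isCont ga e"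
    and pa: "al e > 0" and pg: "ga e < 0"
  shows "\<exists>A B m r. A > 0 \<and> B > 0 \<and> m > 0 \<and> r > 0 \<and> (\<forall>z\<in>cball e r. DV A B e z (F z) \<le> - m * VV A B e z)"
proof -
  obtain r where r: "r > 0" and bnd: "\<And>z. z \<in> cball e r \<Longrightarrow> al z \<ge> al e / 2 \<and> \<bar>be z\<bar> \<le> \<bar>be e\<bar> + 1 \<and> ga z \<le> ga e / 2"
    using cont_bounds[OF ca cb cg pa pg] by blast
  define a0 where "a0 = al e / 2"
  define g0 where "g0 = - ga e / 2"
  define b0 where "b0 = \<bar>be e\<bar> + 1"
  define K where "K = b0^2 / (a0 * g0) + 1"
  have a0: "a0 > 0" and g0: "g0 > 0" using pa pg by (auto simp: a0_def g0_def)
  have Kpos: "K > 0" unfolding K_def using a0 g0 by (simp add: add_nonneg_pos)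
  have "\<forall>z\<in>cball e r. DV K 1 e z (F z) \<le> - min a0 g0 * VV K 1 e z"
  proof
    fix z assume z: "z \<in> cball e r"
    have "2 * K * (fst z - fst e) * (ga z * (fst z - fst e)) + 2 * (snd z - snd e) * (- al z * (snd z - snd e) + be z * (fst z - fst e))
        \<le> - min a0 g0 * (K * (fst z - fst e)^2 + (snd z - snd e)^2)"
      by (rule alg[OF a0 g0 _ _ _ K_def]) (use bnd[OF z] in \<open>auto simp: a0_def b0_def g0_def\<close>)
    then show "DV K 1 e z (F z) \<le> - min a0 g0 * VV K 1 e z"
      unfolding DV_def VV_def Ffst Fsnd by (simp add: mult.assoc)
  qed
  then show ?thesis using Kpos a0 g0 r by (intro exI[of _ K] exI[of _ 1] exI[of _ "min a0 g0"] exI[of _ r]) auto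
qed

lemma lyap_order2:
  fixes F :: "real \<times> real \<Rightarrow> real \<times> real"
  assumes Fsnd: "\<And>z. snd (F z) = ga z * (snd z - snd e)"
    and Ffst: "\<And>z. fst (F z) = - al z * (fst z - fst e) + be z * (snd z - snd e)"
    and ca: "isCont al e" and cb: "isCont be e" and cg: "isCont ga e"
    and pa: "al e > 0" and pg: "ga e < 0"
  shows "\<exists>A B m r. A > 0 \<and> B > 0 \<and> m > 0 \<and> r > 0 \<and> (\<forall>z\<in>cball e r. DV A B e z (F z) \<le> - m * VV A B e z)"
proof -
  obtain r where r: "r > 0" and bnd: "\<And>z. z \<in> cball e r \<Longrightarrow> al z \<ge> al e / 2 \<and> \<bar>be z\<bar> \<le> \<bar>be e\<bar> + 1 \<and> ga z \<le> ga e / 2"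
    using cont_bounds[OF ca cb cg pa pg] by blast
  define a0 where "a0 = al e / 2"
  define g0 where "g0 = - ga e / 2"
  define b0 where "b0 = \<bar>be e\<bar> + 1"
  define K where "K = b0^2 / (a0 * g0) + 1"
  have a0: "a0 > 0" and g0: "g0 > 0" using pa pg by (auto simp: a0_def g0_def)
  have Kpos: "K > 0" unfolding K_def using a0 g0 by (simp add: add_nonneg_pos)
  have "\<forall>z\<in>cball e r. DV 1 K e z (F z) \<le> - min a0 g0 * VV 1 K e z"
  proof
    fix z assume z: "z \<in> cball e r"
    have "2 * K * (snd z - snd e) * (ga z * (snd z - snd e)) + 2 * (fst z - fst e) * (- al z * (fst z - fst e) + be z * (snd z - snd e))
        \<le> - min a0 g0 * (K * (snd z - snd e)^2 + (fst z - fst e)^2)"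
      by (rule alg[OF a0 g0 _ _ _ K_def]) (use bnd[OF z] in \<open>auto simp: a0_def b0_def g0_def\<close>)
    then show "DV 1 K e z (F z) \<le> - min a0 g0 * VV 1 K e z"
      unfolding DV_def VV_def Ffst Fsnd by (simp add: algebra_simps)
  qed
  then show ?thesis using Kpos a0 g0 r by (intro exI[of _ 1] exI[of _ K] exI[of _ "min a0 g0"] exI[of _ r]) auto
qed

lemma las_from_lyap:
  assumes ok: "params_ok P"
    and L: "\<exists>A B m r. A > 0 \<and> B > 0 \<and> m > 0 \<and> r > 0 \<and> (\<forall>z\<in>cball e r. DV A B e z (field P W f z) \<le> - m * VV A B e z)"
    and Fe: "field P W f e = 0"
  shows "loc_asymp_stable (field P W f) e"
proof -
  obtain A B m r where H: "A > 0" "B > 0" "m > 0" "r > 0" "\<forall>z\<in>cball e r. DV A B e z (field P W f z) \<le> - m * VV A B e z"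
    using L by blast
  obtain Lf where "Lf-lipschitz_on (cball e r) (field P W f)" using field_lip[OF ok] by blast
  then show ?thesis by (rule abstract_las[OF H(1) H(2) H(3) H(4)]) (use H(5) Fe in auto)
qed

lemma id3:
  fixes g K d T G f v D :: real
  assumes "g \<noteq> 0" "K \<noteq> 0" "d \<noteq> 0" "D \<noteq> 0"
  shows "T * (g * (1 - T / K) - d - f * v * (G^2 / D))
     = - (T * g / K) * (T - K * (1 - 1 / (g / d))) + (- (T * f * v * G / D)) * G"
  using assms by (simp add: field_simps power2_eq_square)

lemma id2:
  fixes g K d T G e :: real
  assumes "g \<noteq> 0" "K \<noteq> 0" "d \<noteq> 0"
  shows "G * (g * (1 - G / K) - d - e * T)
     = - (G * g / K) * (G - K * (1 - 1 / (g / d))) + (- e * G) * T"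
  using assms by (simp add: field_simps)

theorem theorem2:
  fixes P :: params and W f :: real
  assumes "params_ok P" and "W > 0" and "f > 0"
  shows "(R1W P W < 1 \<and> R2W P W f < 1 \<longrightarrow> loc_asymp_stable (field P W f) (0, 0))
       \<and> (R2W P W f > 1 \<and> RG P W f < 1 \<longrightarrow> loc_asymp_stable (field P W f) (Gstar P W f, 0))
       \<and> (R1W P W > 1 \<and> RF P W f < 1 \<longrightarrow> loc_asymp_stable (field P W f) (0, Tstar P W))"
proof -
  note ok = assms(1)
  have pp: "gammaG P > 0" "gammaT P > 0" "bG P > 0" "bT P > 0" "deltaG P > 0" "deltaT P > 0"
    "etaTG P > 0" "lamfG P > 0" "lamfTmin P > 0" "lamfTmax P > 0" "alpha P > 0"
    using ok by (auto simp: params_ok_def)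
  have gGp: "gG P W > 0" unfolding gG_def using pp assms(2) by simp
  have gTp: "gT P W > 0" unfolding gT_def using pp assms(2) by simp
  have KGp: "KG P W > 0" by (rule KG_pos[OF ok])
  have KTp: "KT P W > 0" by (rule KT_pos[OF ok])
  have al: "alpha P \<noteq> 0" using pp by simp
  have nz: "(x::real)^2 + (alpha P)^2 \<noteq> 0" for x using al by (simp add: add_nonneg_pos)
  have ompos: "omega P x \<ge> 0" for x unfolding omega_def by simp
  have om0: "omega P 0 = 0" unfolding omega_def by simp
  have th0: "vartheta P 0 = lamfTmax P" unfolding vartheta_def by simp
  have dGf: "deltaG P + lamfG P * f > 0" using pp assms(3) by (simp add: add_pos_pos)
  define ga1 where "ga1 z = gG P W * (1 - fst z / KG P W) - deltaG P - etaTG P * snd z - lamfG P * f" for z :: "real \<times> real"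
  have cga1: "isCont ga1 e" for e unfolding ga1_def using KGp by (intro continuous_intros) auto
  have Ffst1: "fst (field P W f z) = ga1 z * (fst z - fst (0::real, T0))" for z T0
    by (simp add: field_def Let_def ga1_def algebra_simps)
  have c1: "loc_asymp_stable (field P W f) (0, 0)" if H: "R1W P W < 1" "R2W P W f < 1"
  proof (rule las_from_lyap[OF ok])
    show "field P W f (0, 0) = 0" by (simp add: field_def Let_def zero_prod_def)
    define al1 where "al1 z = - (gT P W * (1 - snd z / KT P W) - deltaT P - f * vartheta P (snd z) * omega P (fst z))" for z :: "real \<times> real"
    have a: "gT P W < deltaT P" using H(1) pp by (simp add: R1W_def divide_less_eq)
    have b: "gG P W < deltaG P + lamfG P * f" using H(2) dGf by (simp add: R2W_def divide_less_eq)
    show "\<exists>A B m r. A > 0 \<and> B > 0 \<and> m > 0 \<and> r > 0 \<and> (\<forall>z\<in>cball (0, 0) r. DV A B (0, 0) z (field P W f z) \<le> - m * VV A B (0, 0) z)"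
    proof (rule lyap_order1[where ga = ga1 and al = al1 and be = "\<lambda>_. 0"])
      show "fst (field P W f z) = ga1 z * (fst z - fst (0::real, 0::real))" for z using Ffst1 .
      show "snd (field P W f z) = - al1 z * (snd z - snd (0::real, 0::real)) + 0 * (fst z - fst (0::real, 0::real))" for z
        by (simp add: field_def Let_def al1_def algebra_simps)
      show "isCont al1 (0, 0)" unfolding al1_def vartheta_def omega_def using KTp nz by (intro continuous_intros) auto
      show "isCont (\<lambda>_. 0::real) (0, 0)" by simp
      show "isCont ga1 (0, 0)" by (rule cga1)
      show "al1 (0, 0) > 0" using a by (simp add: al1_def om0)
      show "ga1 (0, 0) < 0" using b by (simp add: ga1_def)
    qed
  qed
  have c3: "loc_asymp_stable (field P W f) (0, Tstar P W)" if H: "R1W P W > 1" "RF P W f < 1"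
  proof -
    define Ts where "Ts = Tstar P W"
    have Tsdef: "Ts = KT P W * (1 - 1 / (gT P W / deltaT P))" by (simp add: Ts_def Tstar_def R1W_def)
    have Tsp: "Ts > 0"
    proof -
      have "1 / R1W P W < 1" using H(1) by simp
      then show ?thesis using KTp by (simp add: Ts_def Tstar_def)
    qed
    have eqT: "gT P W * (1 - Ts / KT P W) - deltaT P = 0"
      unfolding Tsdef using gTp KTp pp by (simp add: field_simps)
    have den: "etaTG P * Ts + deltaG P + lamfG P * f > 0" using mult_pos_pos[of "etaTG P" Ts] Tsp pp dGf by linarith
    have b: "gG P W < etaTG P * Ts + deltaG P + lamfG P * f"
      using H(2) den by (simp add: RF_def Ts_def divide_less_eq)
    define al3 where "al3 z = snd z * gT P W / KT P W" for z :: "real \<times> real"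
    define be3 where "be3 z = - (snd z * f * vartheta P (snd z) * fst z / ((fst z)^2 + (alpha P)^2))" for z :: "real \<times> real"
    have "loc_asymp_stable (field P W f) (0, Ts)"
    proof (rule las_from_lyap[OF ok])
      show "field P W f (0, Ts) = 0"
      proof -
        have "field P W f (0, Ts) = (0, Ts * (gT P W * (1 - Ts / KT P W) - deltaT P))"
          by (simp add: field_def Let_def om0; simp add: algebra_simps)
        then show ?thesis using eqT by (simp add: zero_prod_def)
      qed
      show "\<exists>A B m r. A > 0 \<and> B > 0 \<and> m > 0 \<and> r > 0 \<and> (\<forall>z\<in>cball (0, Ts) r. DV A B (0, Ts) z (field P W f z) \<le> - m * VV A B (0, Ts) z)"
      proof (rule lyap_order1[where ga = ga1 and al = al3 and be = be3])
        show "fst (field P W f z) = ga1 z * (fst z - fst (0::real, Ts))" for z using Ffst1 .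
        show "snd (field P W f z) = - al3 z * (snd z - snd (0::real, Ts)) + be3 z * (fst z - fst (0::real, Ts))" for z
        proof -
          have "snd (field P W f z) = snd z * (gT P W * (1 - snd z / KT P W) - deltaT P - f * vartheta P (snd z) * ((fst z)^2 / ((fst z)^2 + (alpha P)^2)))"
            by (simp add: field_def Let_def omega_def algebra_simps)
          also have "\<dots> = - (snd z * gT P W / KT P W) * (snd z - KT P W * (1 - 1 / (gT P W / deltaT P)))
               + (- (snd z * f * vartheta P (snd z) * fst z / ((fst z)^2 + (alpha P)^2))) * fst z"
            by (rule id3) (use gTp KTp pp nz in auto)
          finally show ?thesis by (simp add: al3_def be3_def Tsdef)
        qed
        show "isCont al3 (0, Ts)" unfolding al3_def using KTp by (intro continuous_intros) auto
        show "isCont be3 (0, Ts)" unfolding be3_def vartheta_def using nz by (intro continuous_intros) auto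
        show "isCont ga1 (0, Ts)" by (rule cga1)
        show "al3 (0, Ts) > 0" using Tsp gTp KTp by (simp add: al3_def)
        show "ga1 (0, Ts) < 0" using b by (simp add: ga1_def)
      qed
    qed
    then show ?thesis by (simp add: Ts_def)
  qed
  have c2: "loc_asymp_stable (field P W f) (Gstar P W f, 0)" if H: "R2W P W f > 1" "RG P W f < 1"
  proof -
    define Gs where "Gs = Gstar P W f"
    define dd where "dd = deltaG P + lamfG P * f"
    have ddp: "dd > 0" using dGf by (simp add: dd_def)
    have Gsdef: "Gs = KG P W * (1 - 1 / (gG P W / dd))" by (simp add: Gs_def Gstar_def R2W_def dd_def)
    have Gsp: "Gs > 0"
    proof -
      have "1 / R2W P W f < 1" using H(1) by simp
      then show ?thesis using KGp by (simp add: Gs_def Gstar_def)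
    qed
    have eqG: "gG P W * (1 - Gs / KG P W) - dd = 0"
      unfolding Gsdef using gGp KGp ddp by (simp add: field_simps)
    have den: "deltaT P + lamfTmax P * f * omega P Gs > 0"
      using pp ompos[of Gs] assms(3) by (simp add: add_pos_nonneg)
    have b: "gT P W < deltaT P + lamfTmax P * f * omega P Gs"
      using H(2) den by (simp add: RG_def Gs_def divide_less_eq)
    define ga2 where "ga2 z = gT P W * (1 - snd z / KT P W) - deltaT P - f * vartheta P (snd z) * omega P (fst z)" for z :: "real \<times> real"
    define al2 where "al2 z = fst z * gG P W / KG P W" for z :: "real \<times> real"
    define be2 where "be2 z = - etaTG P * fst z" for z :: "real \<times> real"
    have "loc_asymp_stable (field P W f) (Gs, 0)"
    proof (rule las_from_lyap[OF ok])
      show "field P W f (Gs, 0) = 0"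
      proof -
        have "field P W f (Gs, 0) = (Gs * (gG P W * (1 - Gs / KG P W) - dd), 0)"
          by (simp add: field_def Let_def dd_def; simp add: algebra_simps)
        then show ?thesis using eqG by (simp add: zero_prod_def)
      qed
      show "\<exists>A B m r. A > 0 \<and> B > 0 \<and> m > 0 \<and> r > 0 \<and> (\<forall>z\<in>cball (Gs, 0) r. DV A B (Gs, 0) z (field P W f z) \<le> - m * VV A B (Gs, 0) z)"
      proof (rule lyap_order2[where ga = ga2 and al = al2 and be = be2])
        show "snd (field P W f z) = ga2 z * (snd z - snd (Gs, 0::real))" for z
          by (simp add: field_def Let_def ga2_def algebra_simps)
        show "fst (field P W f z) = - al2 z * (fst z - fst (Gs, 0::real)) + be2 z * (snd z - snd (Gs, 0::real))" for z
        proof -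
          have "fst (field P W f z) = fst z * (gG P W * (1 - fst z / KG P W) - dd - etaTG P * snd z)"
            by (simp add: field_def Let_def dd_def algebra_simps)
          also have "\<dots> = - (fst z * gG P W / KG P W) * (fst z - KG P W * (1 - 1 / (gG P W / dd))) + (- etaTG P * fst z) * snd z"
            by (rule id2) (use gGp KGp ddp in auto)
          finally show ?thesis by (simp add: al2_def be2_def Gsdef)
        qed
        show "isCont al2 (Gs, 0)" unfolding al2_def using KGp by (intro continuous_intros) auto
        show "isCont be2 (Gs, 0)" unfolding be2_def by (intro continuous_intros)
        show "isCont ga2 (Gs, 0)" unfolding ga2_def vartheta_def omega_def using KTp nz by (intro continuous_intros) auto
        show "al2 (Gs, 0) > 0" using Gsp gGp KGp by (simp add: al2_def)
        show "ga2 (Gs, 0) < 0" using b by (simp add: ga2_def th0 mult.commute mult.left_commute)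
      qed
    qed
    then show ?thesis by (simp add: Gs_def)
  qed
  show ?thesis using c1 c2 c3 by blast
qed

end
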